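(* Let $E$ and $F$ be finite-dimensional real vector spaces, $M\subseteq E$ and $N\subseteq F$ convex polytopes with non-empty interior, and $\phi\colon U\to V$ a $C^1$-map between open subsets $U\subseteq M$ and $V\subseteq N$. For $x\in M$ let $M(x)$ be the smallest face of $M$ containing $x$ and $E(x):=\mathrm{span}_{\mathbb R}(M(x)-x)$; for $y\in N$ let $N(y)$ be the smallest face of $N$ containing $y$ and $F(y):=\mathrm{span}_{\mathbb R}(N(y)-y)$. Then for every $x\in U$: (a) $\phi'(x)(E(x))\subseteq F(\phi(x))$; (b) if $\phi'(x)\colon E\to F$ is injective, then $\dim E(x)\le\dim F(\phi(x))$; (c) if $\phi\colon U\to V$ is a $C^1$-diffeomorphism, then $\phi'(x)(E(x))=F(\phi(x))$.
   Context: A convex polytope is the convex hull of a finite set; $U$ and $V$ are open in $M$ resp. $N$ with the induced topology, and are locally convex with dense interior. A map $\phi\colon U\to F$ is $C^1$ if it is continuous, $C^1$ on the interior $U^0$ (relative to $E$), and $(x,y)\mapsto \phi'(x)y$ extends continuously from $U^0\times E$ to $U\times E$, defining $\phi'(x)$ for all $x\in U$. A $C^1$-diffeomorphism is a bijective $C^1$ map with $C^1$ inverse. *)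

theory Defs
  imports "HOL-Analysis.Analysis"
begin

text \<open>The smallest face of a convex set M containing x (faces are closed under
intersection, so this is the intersection of all faces containing x).\<close>
definition smallest_face :: "'a::real_vector set \<Rightarrow> 'a \<Rightarrow> 'a set" where
  "smallest_face M x = \<Inter>{T. T face_of M \<and> x \<in> T}"

definition face_space :: "'a::real_vector set \<Rightarrow> 'a \<Rightarrow> 'a set" where
  "face_space M x = span ((\<lambda>y. y - x) ` smallest_face M x)"

text \<open>C^1 in the sense of the paper, with f' the (extended) derivative:
f continuous on U, differentiable on the interior of U (in the ambient space)
with derivative f' x there, and (x,y) \<mapsto> f' x y continuous on U \<times> E.\<close>
definition C1_with_deriv ::
  "'a::euclidean_space set \<Rightarrow> ('a \<Rightarrow> 'b::euclidean_space) \<Rightarrow> ('a \<Rightarrow> 'a \<Rightarrow> 'b) \<Rightarrow> bool" where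
  "C1_with_deriv U f f' \<longleftrightarrow>
     continuous_on U f \<and>
     (\<forall>x\<in>interior U. (f has_derivative f' x) (at x)) \<and>
     continuous_on (U \<times> UNIV) (\<lambda>(x, y). f' x y)"

definition C1_map :: "'a::euclidean_space set \<Rightarrow> ('a \<Rightarrow> 'b::euclidean_space) \<Rightarrow> bool" where
  "C1_map U f \<longleftrightarrow> (\<exists>f'. C1_with_deriv U f f')"

definition C1_diffeo ::
  "'a::euclidean_space set \<Rightarrow> 'b::euclidean_space set \<Rightarrow> ('a \<Rightarrow> 'b) \<Rightarrow> bool" where
  "C1_diffeo U V f \<longleftrightarrow> bij_betw f U V \<and> C1_map U f \<and> C1_map V (inv_into U f)"

end

theory Submission
  imports Defs
begin


lemma poly_rep:
  fixes N :: "'a::euclidean_space set"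
  assumes "polytope N"
  shows "\<exists>A::('a \<times> real) set. finite A \<and> N = {z. \<forall>(a,b)\<in>A. a \<bullet> z \<le> b}"
proof -
  obtain F where F: "finite F" "N = \<Inter>F" "\<forall>h\<in>F. \<exists>a b. a \<noteq> 0 \<and> h = {x. a \<bullet> x \<le> b}"
    using polytope_imp_polyhedron[OF assms] unfolding polyhedron_def by blast
  have "\<forall>h\<in>F. \<exists>p::'a\<times>real. h = {x. fst p \<bullet> x \<le> snd p}"
  proof
    fix h assume "h \<in> F"
    then obtain a b where "h = {x. a \<bullet> x \<le> b}" using F(3) by blast
    then show "\<exists>p::'a\<times>real. h = {x. fst p \<bullet> x \<le> snd p}" by (intro exI[of _ "(a,b)"]) simp
  qed
  then obtain g where g: "\<forall>h\<in>F. h = {x. fst (g h) \<bullet> x \<le> snd (g h)}"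
    by (rule bchoice[elim_format]) blast
  have "N = {z. \<forall>(a,b)\<in>g ` F. a \<bullet> z \<le> b}"
  proof (rule set_eqI)
    fix z
    have "z \<in> N \<longleftrightarrow> (\<forall>h\<in>F. z \<in> h)" using F(2) by simp
    also have "\<dots> \<longleftrightarrow> (\<forall>h\<in>F. fst (g h) \<bullet> z \<le> snd (g h))"
    proof (intro ball_cong refl)
      fix h assume "h \<in> F"
      then have "h = {x. fst (g h) \<bullet> x \<le> snd (g h)}" using g by blast
      then show "z \<in> h \<longleftrightarrow> fst (g h) \<bullet> z \<le> snd (g h)" by (metis mem_Collect_eq)
    qed
    also have "\<dots> \<longleftrightarrow> z \<in> {z. \<forall>(a,b)\<in>g ` F. a \<bullet> z \<le> b}" by (simp add: case_prod_beta)
    finally show "z \<in> N \<longleftrightarrow> z \<in> {z. \<forall>(a,b)\<in>g ` F. a \<bullet> z \<le> b}" .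
  qed
  then show ?thesis using F(1) by blast
qed

definition Lsp :: "('a::euclidean_space \<times> real) set \<Rightarrow> 'a \<Rightarrow> 'a set" where
  "Lsp A y = {w. \<forall>p\<in>A. fst p \<bullet> y = snd p \<longrightarrow> fst p \<bullet> w = 0}"

lemma subspace_Lsp: "subspace (Lsp A y)"
  unfolding subspace_def
proof (intro conjI ballI allI)
  show "0 \<in> Lsp A y" unfolding Lsp_def by simp
next
  fix x z assume "x \<in> Lsp A y" "z \<in> Lsp A y"
  then show "x + z \<in> Lsp A y" unfolding Lsp_def by (simp add: inner_add_right)
next
  fix c :: real and x assume "x \<in> Lsp A y"
  then show "c *\<^sub>R x \<in> Lsp A y" unfolding Lsp_def by simp
qed

lemma Lsp_move:
  fixes y :: "'a::euclidean_space"
  assumes A: "finite A" and N: "N = {z. \<forall>(a,b)\<in>A. a \<bullet> z \<le> b}" and y: "y \<in> N"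
    and w: "w \<in> Lsp A y"
  shows "\<exists>d>0. \<forall>t. \<bar>t\<bar> < d \<longrightarrow> y + t *\<^sub>R w \<in> N"
proof -
  have "\<forall>\<^sub>F t in nhds 0. \<forall>p\<in>A. fst p \<bullet> (y + t *\<^sub>R w) \<le> snd p"
  proof (rule eventually_ball_finite[OF A], rule ballI)
    fix p assume p: "p \<in> A"
    obtain a b where ab: "p = (a,b)" by (cases p)
    show "\<forall>\<^sub>F t in nhds 0. fst p \<bullet> (y + t *\<^sub>R w) \<le> snd p"
    proof (cases "a \<bullet> y = b")
      case True
      have wA: "\<forall>p\<in>A. fst p \<bullet> y = snd p \<longrightarrow> fst p \<bullet> w = 0" using w unfolding Lsp_def by simp
      have "a \<bullet> w = 0" using bspec[OF wA p] ab True by simp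
      then have "\<forall>t. fst p \<bullet> (y + t *\<^sub>R w) \<le> snd p" using True unfolding ab
        by (simp add: inner_add_right)
      then show ?thesis by (simp add: always_eventually)
    next
      case False
      have yA: "\<forall>p\<in>A. fst p \<bullet> y \<le> snd p" using y N by (simp add: case_prod_beta)
      have "a \<bullet> y \<le> b" using bspec[OF yA p] ab by simp
      then have lt: "a \<bullet> y < b" using False by simp
      have "isCont (\<lambda>t. a \<bullet> (y + t *\<^sub>R w)) 0" by (intro continuous_intros)
      then have "((\<lambda>t. a \<bullet> (y + t *\<^sub>R w)) \<longlongrightarrow> a \<bullet> y) (at 0)" by (simp add: isCont_def)
      then have "\<forall>\<^sub>F t in at 0. a \<bullet> (y + t *\<^sub>R w) < b"
        using lt by (rule order_tendstoD)
      then have "\<forall>\<^sub>F t in nhds 0. a \<bullet> (y + t *\<^sub>R w) < b"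
        using lt by (simp add: eventually_nhds_conv_at)
      then show ?thesis unfolding ab fst_conv snd_conv by (rule eventually_mono) simp
    qed
  qed
  then have "\<exists>d>0. \<forall>t. dist t 0 < d \<longrightarrow> (\<forall>p\<in>A. fst p \<bullet> (y + t *\<^sub>R w) \<le> snd p)"
    by (simp only: eventually_nhds_metric)
  then obtain d where d: "d > 0" "\<forall>t. dist t 0 < d \<longrightarrow> (\<forall>p\<in>A. fst p \<bullet> (y + t *\<^sub>R w) \<le> snd p)"
    by (elim exE conjE)
  have "y + t *\<^sub>R w \<in> N" if "\<bar>t\<bar> < d" for t
  proof -
    have "dist t 0 < d" using that by (simp add: dist_real_def)
    then have "\<forall>p\<in>A. fst p \<bullet> (y + t *\<^sub>R w) \<le> snd p" using d(2) by blast
    then show ?thesis unfolding N by (simp add: case_prod_beta)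
  qed
  then show ?thesis using d(1) by auto
qed

lemma face_space_sub_Lsp:
  fixes y :: "'a::euclidean_space"
  assumes A: "finite A" and N: "N = {z. \<forall>(a,b)\<in>A. a \<bullet> z \<le> b}" and y: "y \<in> N"
    and cN: "convex N"
  shows "face_space N y \<subseteq> Lsp A y"
proof -
  define act where "act = {p\<in>A. fst p \<bullet> y = snd p}"
  define T where "T = \<Inter>(insert N ((\<lambda>p. N \<inter> {z. fst p \<bullet> z = snd p}) ` act))"
  have "T face_of N" unfolding T_def
  proof (rule face_of_Inter)
    fix S assume "S \<in> insert N ((\<lambda>p. N \<inter> {z. fst p \<bullet> z = snd p}) ` act)"
    then show "S face_of N"
    proof
      assume "S = N" then show ?thesis using cN by (simp add: face_of_refl)
    next
      assume "S \<in> (\<lambda>p. N \<inter> {z. fst p \<bullet> z = snd p}) ` act"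
      then obtain p where p: "p \<in> act" "S = N \<inter> {z. fst p \<bullet> z = snd p}" by blast
      have "\<And>z. z \<in> N \<Longrightarrow> fst p \<bullet> z \<le> snd p" using p N act_def by force
      then show ?thesis using p face_of_Int_supporting_hyperplane_le[OF cN] by blast
    qed
  qed auto
  moreover have "y \<in> T" unfolding T_def act_def using y by auto
  ultimately have sub: "smallest_face N y \<subseteq> T" unfolding smallest_face_def by blast
  have "(\<lambda>z. z - y) ` smallest_face N y \<subseteq> Lsp A y"
  proof
    fix u assume "u \<in> (\<lambda>z. z - y) ` smallest_face N y"
    then obtain z where z: "z \<in> T" "u = z - y" using sub by blast
    show "u \<in> Lsp A y" unfolding Lsp_def
    proof (clarify)
      fix p assume ab: "p \<in> A" "fst p \<bullet> y = snd p"
      obtain a b where "p = (a,b)" by (cases p)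
      then have ab: "(a,b) \<in> A" "a \<bullet> y = b" using ab by auto
      have "N \<inter> {z. fst (a,b) \<bullet> z = snd (a,b)} \<in> insert N ((\<lambda>p. N \<inter> {z. fst p \<bullet> z = snd p}) ` act)"
        using ab unfolding act_def by (intro insertI2 imageI) simp
      then have "z \<in> N \<inter> {z. fst (a,b) \<bullet> z = snd (a,b)}" by (rule InterD[OF z(1)[unfolded T_def]])
      then have "a \<bullet> z = b" by simp
      then show "fst p \<bullet> u = 0" using ab z \<open>p = (a,b)\<close> by (simp add: inner_diff_right)
    qed
  qed
  then show ?thesis unfolding face_space_def by (rule span_minimal[OF _ subspace_Lsp])
qed

lemma Lsp_sub_face_space:
  fixes y :: "'a::euclidean_space"
  assumes A: "finite A" and N: "N = {z. \<forall>(a,b)\<in>A. a \<bullet> z \<le> b}" and y: "y \<in> N"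
    and w: "w \<in> Lsp A y"
  shows "w \<in> face_space N y"
proof (cases "w = 0")
  case True then show ?thesis by (simp add: face_space_def span_zero)
next
  case False
  obtain d where d: "d > 0" "\<And>t. \<bar>t\<bar> < d \<Longrightarrow> y + t *\<^sub>R w \<in> N"
    using Lsp_move[OF A N y w] by blast
  define t where "t = d/2"
  have t: "t > 0" "\<bar>t\<bar> < d" "\<bar>-t\<bar> < d" using d unfolding t_def by auto
  have p1: "y + t *\<^sub>R w \<in> N" and p2: "y - t *\<^sub>R w \<in> N"
    using d(2)[OF t(2)] d(2)[OF t(3)] by auto
  have mid: "y \<in> open_segment (y - t *\<^sub>R w) (y + t *\<^sub>R w)"
  proof -
    have "(y - t *\<^sub>R w) + (y + t *\<^sub>R w) = 2 *\<^sub>R y" by (simp add: scaleR_2)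
    then have "midpoint (y - t *\<^sub>R w) (y + t *\<^sub>R w) = y"
      unfolding midpoint_def by simp
    moreover have "y - t *\<^sub>R w \<noteq> y + t *\<^sub>R w"
    proof
      assume "y - t *\<^sub>R w = y + t *\<^sub>R w"
      then have "(y + t *\<^sub>R w) - (y - t *\<^sub>R w) = 0" by simp
      moreover have "(y + t *\<^sub>R w) - (y - t *\<^sub>R w) = 2 *\<^sub>R (t *\<^sub>R w)"
        by (metis add_diff_cancel_left' diff_diff_eq2 scaleR_2)
      ultimately have "2 *\<^sub>R (t *\<^sub>R w) = 0" by simp
      then show False using t False by simp
    qed
    ultimately show ?thesis by (metis midpoint_in_open_segment)
  qed
  have "y + t *\<^sub>R w \<in> smallest_face N y" unfolding smallest_face_def
  proof
    fix S assume "S \<in> {T. T face_of N \<and> y \<in> T}"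
    then have "S face_of N" "y \<in> S" by auto
    then show "y + t *\<^sub>R w \<in> S" using p1 p2 mid unfolding face_of_def by blast
  qed
  then have "t *\<^sub>R w \<in> (\<lambda>z. z - y) ` smallest_face N y" by force
  then have "t *\<^sub>R w \<in> face_space N y" unfolding face_space_def by (rule span_base)
  then have "(1/t) *\<^sub>R (t *\<^sub>R w) \<in> face_space N y" unfolding face_space_def by (rule span_mul)
  then show ?thesis using t by simp
qed



lemma dense_int_U:
  fixes M :: "'a::euclidean_space set"
  assumes cvx: "convex M" and int: "interior M \<noteq> {}"
    and U: "openin (top_of_set M) U" and z: "z \<in> U"
  shows "z \<in> closure (interior U)"
proof -
  obtain Q where O: "open Q" "U = M \<inter> Q" using U by (auto simp: openin_open)
  have iU: "interior U = Q \<inter> interior M" using O by (simp add: interior_open Int_commute)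
  have "z \<in> closure M" using z O closure_subset by blast
  then have "z \<in> Q \<inter> closure (interior M)" using z O convex_closure_interior[OF cvx int] by blast
  then show ?thesis unfolding iU using open_Int_closure_subset[OF O(1)] by blast
qed

lemma C1_cont_h:
  assumes "C1_with_deriv U f f'"
  shows "continuous_on U (\<lambda>x. f' x h)"
proof -
  have c: "continuous_on (U \<times> UNIV) (\<lambda>(x, y). f' x y)" using assms by (simp add: C1_with_deriv_def)
  have "continuous_on U (\<lambda>x. (\<lambda>(x, y). f' x y) (x, h))"
    by (rule continuous_on_compose2[OF c continuous_on_Pair[OF continuous_on_id continuous_on_const]]) auto
  then show ?thesis by simp
qed

lemma C1_linear:
  fixes M :: "'a::euclidean_space set" and f :: "'a \<Rightarrow> 'b::euclidean_space"
  assumes cvx: "convex M" and int: "interior M \<noteq> {}"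
    and U: "openin (top_of_set M) U" and C1: "C1_with_deriv U f f'" and z: "z \<in> U"
  shows "linear (f' z)"
proof -
  obtain s where s: "\<And>n. s n \<in> interior U" "s \<longlonglongrightarrow> z"
    using dense_int_U[OF cvx int U z] unfolding closure_sequential by blast
  have lin: "linear (f' (s n))" for n
  proof -
    have "(f has_derivative f' (s n)) (at (s n))" using C1 s(1) unfolding C1_with_deriv_def by blast
    then show ?thesis by (rule has_derivative_linear)
  qed
  have lim: "(\<lambda>n. f' (s n) h) \<longlonglongrightarrow> f' z h" for h
    by (rule continuous_on_tendsto_compose[OF C1_cont_h[OF C1] s(2) z])
      (intro always_eventually allI, use s(1) interior_subset in blast)
  show ?thesis
  proof (rule linearI)
    fix a b
    have "(\<lambda>n. f' (s n) (a + b)) = (\<lambda>n. f' (s n) a + f' (s n) b)"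
      using lin by (simp add: linear_add)
    then have "(\<lambda>n. f' (s n) a + f' (s n) b) \<longlonglongrightarrow> f' z (a + b)" using lim[of "a+b"] by simp
    moreover have "(\<lambda>n. f' (s n) a + f' (s n) b) \<longlonglongrightarrow> f' z a + f' z b"
      by (intro tendsto_add lim)
    ultimately show "f' z (a + b) = f' z a + f' z b" by (rule LIMSEQ_unique)
  next
    fix c :: real and a
    have "(\<lambda>n. f' (s n) (c *\<^sub>R a)) = (\<lambda>n. c *\<^sub>R f' (s n) a)"
      using lin by (simp add: linear_scale)
    then have "(\<lambda>n. c *\<^sub>R f' (s n) a) \<longlonglongrightarrow> f' z (c *\<^sub>R a)" using lim[of "c *\<^sub>R a"] by simp
    moreover have "(\<lambda>n. c *\<^sub>R f' (s n) a) \<longlonglongrightarrow> c *\<^sub>R f' z a"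
      by (intro tendsto_scaleR tendsto_const lim)
    ultimately show "f' z (c *\<^sub>R a) = c *\<^sub>R f' z a" by (rule LIMSEQ_unique)
  qed
qed

lemma lin_basis_bound:
  fixes L1 L2 :: "'a::euclidean_space \<Rightarrow> 'b::euclidean_space"
  assumes l1: "linear L1" and l2: "linear L2" and c: "\<And>i. i \<in> Basis \<Longrightarrow> norm (L1 i - L2 i) \<le> c"
  shows "norm (L1 h - L2 h) \<le> real DIM('a) * c * norm h"
proof -
  have "L1 h - L2 h = (\<Sum>i\<in>Basis. (h \<bullet> i) *\<^sub>R (L1 i - L2 i))"
  proof -
    have "L1 h - L2 h = L1 (\<Sum>i\<in>Basis. (h \<bullet> i) *\<^sub>R i) - L2 (\<Sum>i\<in>Basis. (h \<bullet> i) *\<^sub>R i)"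
      by (simp add: euclidean_representation)
    also have "\<dots> = (\<Sum>i\<in>Basis. (h \<bullet> i) *\<^sub>R L1 i) - (\<Sum>i\<in>Basis. (h \<bullet> i) *\<^sub>R L2 i)"
      by (simp add: linear_sum[OF l1] linear_sum[OF l2] linear_scale[OF l1] linear_scale[OF l2])
    also have "\<dots> = (\<Sum>i\<in>Basis. (h \<bullet> i) *\<^sub>R (L1 i - L2 i))"
      by (simp add: sum_subtractf scaleR_diff_right)
    finally show ?thesis .
  qed
  also have "norm \<dots> \<le> (\<Sum>i\<in>Basis. norm ((h \<bullet> i) *\<^sub>R (L1 i - L2 i)))" by (rule norm_sum)
  also have "\<dots> \<le> (\<Sum>i\<in>(Basis::'a set). norm h * c)"
  proof (intro sum_mono)
    fix i :: 'a assume i: "i \<in> Basis"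
    have "norm ((h \<bullet> i) *\<^sub>R (L1 i - L2 i)) = \<bar>h \<bullet> i\<bar> * norm (L1 i - L2 i)" by simp
    also have "\<dots> \<le> norm h * c"
      by (rule mult_mono[OF Basis_le_norm[OF i] c[OF i]]) auto
    finally show "norm ((h \<bullet> i) *\<^sub>R (L1 i - L2 i)) \<le> norm h * c" .
  qed
  also have "\<dots> = real DIM('a) * c * norm h" by simp
  finally show ?thesis .
qed

lemma C1_has_derivative_within:
  fixes M :: "'a::euclidean_space set" and f :: "'a \<Rightarrow> 'b::euclidean_space"
  assumes cvx: "convex M" and clM: "closed M" and int: "interior M \<noteq> {}"
    and U: "openin (top_of_set M) U" and C1: "C1_with_deriv U f f'" and y: "y \<in> U"
  shows "(f has_derivative f' y) (at y within U)"
proof -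
  have liny: "linear (f' y)" by (rule C1_linear[OF cvx int U C1 y])
  have linU: "\<And>z. z \<in> U \<Longrightarrow> linear (f' z)" by (rule C1_linear[OF cvx int U C1])
  obtain Q where Q: "open Q" "U = M \<inter> Q" using U by (auto simp: openin_open)
  have UM: "U \<subseteq> M" using Q by blast
  show ?thesis unfolding has_derivative_within_alt
  proof (intro conjI allI impI)
    show "bounded_linear (f' y)" using liny by (simp add: linear_conv_bounded_linear)
  next
    fix e :: real assume e: "e > 0"
    define c where "c = e / real DIM('a)"
    have c: "c > 0" unfolding c_def using e by simp
    have "\<forall>\<^sub>F z in at y within U. \<forall>i\<in>Basis. dist (f' z i) (f' y i) < c"
    proof (rule eventually_ball_finite[OF finite_Basis], rule ballI)
      fix i :: 'a assume "i \<in> Basis"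
      have "((\<lambda>z. f' z i) \<longlongrightarrow> f' y i) (at y within U)"
        using C1_cont_h[OF C1, of i] y unfolding continuous_on_def by blast
      then show "\<forall>\<^sub>F z in at y within U. dist (f' z i) (f' y i) < c"
        using c by (rule tendstoD)
    qed
    then obtain d where d: "d > 0" "\<forall>z\<in>U. z \<noteq> y \<and> dist z y < d \<longrightarrow> (\<forall>i\<in>Basis. dist (f' z i) (f' y i) < c)"
      unfolding eventually_at by (elim exE conjE)
    obtain r where r: "r > 0" "ball y r \<subseteq> Q" using Q y open_contains_ball by blast
    define \<rho> where "\<rho> = min d r / 2"
    have \<rho>: "\<rho> > 0" "\<rho> < d" "\<rho> < r" unfolding \<rho>_def using d r by auto
    define K where "K = M \<inter> cball y \<rho>"
    have KU: "K \<subseteq> U"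
    proof
      fix z assume "z \<in> K"
      then have "z \<in> M" "dist y z \<le> \<rho>" unfolding K_def by auto
      then have "z \<in> ball y r" using \<rho> by simp
      then show "z \<in> U" using Q r \<open>z \<in> M\<close> by blast
    qed
    have yK: "y \<in> K" unfolding K_def using y UM \<rho> by auto
    have bound: "norm (f' z h - f' y h) \<le> e * norm h" if z: "z \<in> K" for z h
    proof -
      have "norm (f' z i - f' y i) \<le> c" if i: "i \<in> Basis" for i
      proof (cases "z = y")
        case True then show ?thesis using c by simp
      next
        case False
        have "dist z y \<le> \<rho>" using z unfolding K_def by (simp add: dist_commute)
        then have "dist (f' z i) (f' y i) < c" using d(2) False KU z i \<rho> by auto
        then show ?thesis by (simp add: dist_norm)
      qed
      then have "norm (f' z h - f' y h) \<le> real DIM('a) * c * norm h"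
        by (intro lin_basis_bound linU liny) (use z KU in auto)
      also have "\<dots> = e * norm h" unfolding c_def by simp
      finally show ?thesis .
    qed
    define g where "g = (\<lambda>z. f z - f' y z)"
    have cK: "convex K" unfolding K_def by (intro convex_Int cvx convex_cball)
    have clK: "closed K" unfolding K_def by (intro closed_Int clM closed_cball)
    have iK: "interior K = interior M \<inter> ball y \<rho>" unfolding K_def by (simp add: interior_Int)
    have "y \<in> closure (interior M)" using y UM convex_closure_interior[OF cvx int] closure_subset by blast
    then obtain p where p: "p \<in> interior M" "dist p y < \<rho>" using \<rho> unfolding closure_approachable by blast
    have iKne: "interior K \<noteq> {}" unfolding iK using p by (auto simp: dist_commute)
    have clo: "closure (interior K) = K"
      using convex_closure_interior[OF cK iKne] clK by (simp add: closure_closed)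
    have iKU: "interior K \<subseteq> interior U" using KU by (rule interior_mono)
    have inner_bd: "norm (g a - g b) \<le> e * norm (a - b)" if "a \<in> interior K" "b \<in> interior K" for a b
    proof (rule differentiable_bound[OF convex_interior[OF cK] _ _ that])
      fix x assume x: "x \<in> interior K"
      then have "x \<in> interior U" using iKU by blast
      then have "(f has_derivative f' x) (at x)" using C1 unfolding C1_with_deriv_def by blast
      moreover have "(f' y has_derivative f' y) (at x)"
        using liny by (simp add: linear_conv_bounded_linear bounded_linear_imp_has_derivative)
      ultimately have "(g has_derivative (\<lambda>h. f' x h - f' y h)) (at x)"
        unfolding g_def by (rule has_derivative_diff)
      then show "(g has_derivative (\<lambda>h. f' x h - f' y h)) (at x within interior K)"
        by (rule has_derivative_at_withinI)
      show "onorm (\<lambda>h. f' x h - f' y h) \<le> e"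
        by (rule onorm_le) (use bound x interior_subset in blast)
    qed
    have gcont: "continuous_on K g"
    proof -
      have "continuous_on K f" using C1 KU unfolding C1_with_deriv_def by (blast intro: continuous_on_subset)
      moreover have "continuous_on K (f' y)" using liny by (simp add: linear_conv_bounded_linear linear_continuous_on)
      ultimately show ?thesis unfolding g_def by (rule continuous_on_diff)
    qed
    have Gcont: "continuous_on (K \<times> K) (\<lambda>q. norm (g (fst q) - g (snd q)) - e * norm (fst q - snd q))"
    proof -
      have c1: "continuous_on (K \<times> K) (\<lambda>q. g (fst q))"
        by (rule continuous_on_compose2[OF gcont continuous_on_fst]) auto
      have c2: "continuous_on (K \<times> K) (\<lambda>q. g (snd q))"
        by (rule continuous_on_compose2[OF gcont continuous_on_snd]) auto
      show ?thesis by (intro continuous_intros c1 c2)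
    qed
    have all_bd: "norm (g a - g b) \<le> e * norm (a - b)" if "a \<in> K" "b \<in> K" for a b
    proof -
      have "closure (interior K \<times> interior K) = K \<times> K" by (simp add: closure_Times clo)
      then have "norm (g (fst (a,b)) - g (snd (a,b))) - e * norm (fst (a,b) - snd (a,b)) \<le> 0"
        using continuous_le_on_closure[of "interior K \<times> interior K"
            "\<lambda>q. norm (g (fst q) - g (snd q)) - e * norm (fst q - snd q)" "(a,b)" 0]
          Gcont that inner_bd by force
      then show ?thesis by simp
    qed
    show "\<exists>d>0. \<forall>z\<in>U. norm (z - y) < d \<longrightarrow> norm (f z - f y - f' y (z - y)) \<le> e * norm (z - y)"
    proof (intro exI[of _ \<rho>] conjI ballI impI)
      show "\<rho> > 0" by fact
      fix z assume z: "z \<in> U" "norm (z - y) < \<rho>"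
      then have "z \<in> K" unfolding K_def using UM by (auto simp: dist_norm norm_minus_commute)
      then have "norm (g z - g y) \<le> e * norm (z - y)" using all_bd yK by blast
      moreover have "g z - g y = f z - f y - f' y (z - y)"
        unfolding g_def using liny by (simp add: linear_diff)
      ultimately show "norm (f z - f y - f' y (z - y)) \<le> e * norm (z - y)" by simp
    qed
  qed
qed



lemma line_in:
  fixes M :: "'a::euclidean_space set"
  assumes pM: "polytope M" and U: "openin (top_of_set M) U" and x: "x \<in> U"
    and v: "v \<in> face_space M x"
  shows "\<exists>\<delta>>0. \<forall>t. \<bar>t\<bar> < \<delta> \<longrightarrow> x + t *\<^sub>R v \<in> U"
proof -
  obtain A where A: "finite A" "M = {z. \<forall>(a,b)\<in>A. a \<bullet> z \<le> b}" using poly_rep[OF pM] by blast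
  obtain Q where Q: "open Q" "U = M \<inter> Q" using U by (auto simp: openin_open)
  have xM: "x \<in> M" using x Q by blast
  have "v \<in> Lsp A x" using face_space_sub_Lsp[OF A xM polytope_imp_convex[OF pM]] v by blast
  then obtain d1 where d1: "d1 > 0" "\<And>t. \<bar>t\<bar> < d1 \<Longrightarrow> x + t *\<^sub>R v \<in> M"
    using Lsp_move[OF A xM] by blast
  obtain r where r: "r > 0" "ball x r \<subseteq> Q" using Q x open_contains_ball by blast
  define \<delta> where "\<delta> = min d1 (r / (norm v + 1))"
  have nv: "norm v + 1 > 0" by (metis norm_ge_zero add_nonneg_pos zero_less_one)
  have \<delta>: "\<delta> > 0" unfolding \<delta>_def using d1 r nv by simp
  have "x + t *\<^sub>R v \<in> U" if t: "\<bar>t\<bar> < \<delta>" for t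
  proof -
    have "\<bar>t\<bar> < r / (norm v + 1)" using t unfolding \<delta>_def by simp
    then have "\<bar>t\<bar> * (norm v + 1) < r" using pos_less_divide_eq[OF nv] by blast
    moreover have "\<bar>t\<bar> * norm v \<le> \<bar>t\<bar> * (norm v + 1)" by (simp add: mult_left_mono)
    ultimately have "dist x (x + t *\<^sub>R v) < r" by (simp add: dist_norm)
    then have "x + t *\<^sub>R v \<in> Q" using r by auto
    moreover have "x + t *\<^sub>R v \<in> M" using d1 t unfolding \<delta>_def by simp
    ultimately show ?thesis using Q by blast
  qed
  then show ?thesis using \<delta> by blast
qed

lemma line_deriv:
  fixes x v :: "'a::real_normed_vector"
  shows "((\<lambda>t::real. x + t *\<^sub>R v) has_derivative (\<lambda>t. t *\<^sub>R v)) (at 0 within S)"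
  by (auto intro!: derivative_eq_intros)

lemma part_a:
  fixes M :: "'a::euclidean_space set" and N :: "'b::euclidean_space set"
    and \<phi> :: "'a \<Rightarrow> 'b"
  assumes pM: "polytope M" and iM: "interior M \<noteq> {}" and pN: "polytope N"
    and U: "openin (top_of_set M) U" and img: "\<phi> ` U \<subseteq> N"
    and C1: "C1_with_deriv U \<phi> \<phi>'" and x: "x \<in> U" and v: "v \<in> face_space M x"
  shows "\<phi>' x v \<in> face_space N (\<phi> x)"
proof -
  obtain B where B: "finite B" "N = {z. \<forall>(a,b)\<in>B. a \<bullet> z \<le> b}" using poly_rep[OF pN] by blast
  obtain \<delta> where \<delta>: "\<delta> > 0" "\<And>t. \<bar>t\<bar> < \<delta> \<Longrightarrow> x + t *\<^sub>R v \<in> U"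
    using line_in[OF pM U x v] by blast
  define S where "S = {-\<delta><..<\<delta>}"
  have S: "open S" "0 \<in> S" unfolding S_def using \<delta> by auto
  have gS: "(\<lambda>t. x + t *\<^sub>R v) ` S \<subseteq> U" unfolding S_def using \<delta> by auto
  have D: "(\<phi> has_derivative \<phi>' x) (at x within U)"
    by (rule C1_has_derivative_within[OF polytope_imp_convex[OF pM] polytope_imp_closed[OF pM] iM U C1 x])
  have D': "(\<phi> has_derivative \<phi>' x) (at ((\<lambda>t. x + t *\<^sub>R v) 0) within (\<lambda>t. x + t *\<^sub>R v) ` S)"
    using has_derivative_subset[OF D gS] by simp
  have "((\<phi> \<circ> (\<lambda>t. x + t *\<^sub>R v)) has_derivative (\<phi>' x \<circ> (\<lambda>t. t *\<^sub>R v))) (at 0 within S)"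
    by (rule diff_chain_within[OF line_deriv D'])
  then have Dc: "((\<lambda>t. \<phi> (x + t *\<^sub>R v)) has_derivative (\<lambda>t. \<phi>' x (t *\<^sub>R v))) (at 0)"
    using at_within_open[OF S(2) S(1)] by (simp add: o_def)
  define w where "w = \<phi>' x v"
  have linx: "linear (\<phi>' x)" by (rule C1_linear[OF polytope_imp_convex[OF pM] iM U C1 x])
  have yN: "\<phi> x \<in> N" using img x by blast
  have "w \<in> Lsp B (\<phi> x)" unfolding Lsp_def
  proof (intro CollectI ballI impI)
    fix p assume p: "p \<in> B" "fst p \<bullet> \<phi> x = snd p"
    have "((\<lambda>t. fst p \<bullet> \<phi> (x + t *\<^sub>R v)) has_derivative (\<lambda>t. fst p \<bullet> \<phi>' x (t *\<^sub>R v))) (at 0)"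
      by (rule bounded_linear.has_derivative[OF bounded_linear_inner_right Dc])
    moreover have "(\<lambda>t. fst p \<bullet> \<phi>' x (t *\<^sub>R v)) = (*) (fst p \<bullet> w)"
      unfolding w_def using linx by (auto simp: linear_scale)
    ultimately have "DERIV (\<lambda>t. fst p \<bullet> \<phi> (x + t *\<^sub>R v)) 0 :> (fst p \<bullet> w)"
      by (simp add: has_field_derivative_def)
    moreover have "\<forall>t. \<bar>0 - t\<bar> < \<delta> \<longrightarrow> fst p \<bullet> \<phi> (x + t *\<^sub>R v) \<le> fst p \<bullet> \<phi> (x + 0 *\<^sub>R v)"
    proof (intro allI impI)
      fix t :: real assume "\<bar>0 - t\<bar> < \<delta>"
      then have "\<phi> (x + t *\<^sub>R v) \<in> N" using \<delta>(2) img by auto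
      then have "\<forall>q\<in>B. fst q \<bullet> \<phi> (x + t *\<^sub>R v) \<le> snd q" using B(2) by (simp add: case_prod_beta)
      then show "fst p \<bullet> \<phi> (x + t *\<^sub>R v) \<le> fst p \<bullet> \<phi> (x + 0 *\<^sub>R v)" using p by simp
    qed
    ultimately show "fst p \<bullet> w = 0" by (rule DERIV_local_max[OF _ \<delta>(1)])
  qed
  then show ?thesis unfolding w_def by (rule Lsp_sub_face_space[OF B yN])
qed

theorem lemma5p2:
  fixes M :: "'a::euclidean_space set" and N :: "'b::euclidean_space set"
    and U :: "'a set" and V :: "'b set"
    and \<phi> :: "'a \<Rightarrow> 'b" and \<phi>' :: "'a \<Rightarrow> 'a \<Rightarrow> 'b"
  assumes "polytope M" and "interior M \<noteq> {}"
    and "polytope N" and "interior N \<noteq> {}"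
    and "openin (top_of_set M) U" and "openin (top_of_set N) V"
    and "\<phi> ` U \<subseteq> V"
    and "C1_with_deriv U \<phi> \<phi>'"
  shows "\<forall>x\<in>U.
           \<phi>' x ` face_space M x \<subseteq> face_space N (\<phi> x) \<and>
           (inj (\<phi>' x) \<longrightarrow> dim (face_space M x) \<le> dim (face_space N (\<phi> x))) \<and>
           (C1_diffeo U V \<phi> \<longrightarrow> \<phi>' x ` face_space M x = face_space N (\<phi> x))"
proof (intro ballI conjI impI)
  note pM = assms(1) and iM = assms(2) and pN = assms(3) and iN = assms(4)
    and U = assms(5) and V = assms(6) and img = assms(7) and C1 = assms(8)
  have VN: "V \<subseteq> N" using V by (auto simp: openin_open)
  have UM: "U \<subseteq> M" using U by (auto simp: openin_open)
  have imgN: "\<phi> ` U \<subseteq> N" using img VN by blast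
  fix x assume x: "x \<in> U"
  show A: "\<phi>' x ` face_space M x \<subseteq> face_space N (\<phi> x)"
    using part_a[OF pM iM pN U imgN C1 x] by blast
  have linx: "linear (\<phi>' x)" by (rule C1_linear[OF polytope_imp_convex[OF pM] iM U C1 x])
  {
    assume inj: "inj (\<phi>' x)"
    have "dim (face_space M x) = dim (\<phi>' x ` face_space M x)"
      using dim_image_eq[OF linx, of "face_space M x"] inj by (simp add: inj_on_subset)
    also have "\<dots> \<le> dim (face_space N (\<phi> x))" using A by (rule dim_subset)
    finally show "dim (face_space M x) \<le> dim (face_space N (\<phi> x))" .
  }
  assume dif: "C1_diffeo U V \<phi>"
  define \<psi> where "\<psi> = inv_into U \<phi>"
  have bij: "bij_betw \<phi> U V" and C1p: "C1_map V \<psi>" using dif unfolding C1_diffeo_def \<psi>_def by auto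
  obtain \<psi>' where C1\<psi>: "C1_with_deriv V \<psi> \<psi>'" using C1p unfolding C1_map_def by blast
  have bij2: "bij_betw \<psi> V U" unfolding \<psi>_def by (rule bij_betw_inv_into[OF bij])
  have imgU: "\<psi> ` V \<subseteq> M" using bij2 UM by (auto simp: bij_betw_def)
  have injU: "inj_on \<phi> U" using bij by (simp add: bij_betw_def)
  have \<psi>x: "\<psi> (\<phi> x) = x" unfolding \<psi>_def using injU x by (rule inv_into_f_f)
  have \<phi>\<psi>: "\<phi> (\<psi> z) = z" if "z \<in> V" for z
    unfolding \<psi>_def using that bij by (simp add: bij_betw_def f_inv_into_f)
  define y where "y = \<phi> x"
  have yV: "y \<in> V" unfolding y_def using x img by blast
  show "\<phi>' x ` face_space M x = face_space N (\<phi> x)"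
  proof
    show "\<phi>' x ` face_space M x \<subseteq> face_space N (\<phi> x)" by (rule A)
  next
    show "face_space N (\<phi> x) \<subseteq> \<phi>' x ` face_space M x"
    proof
      fix w assume w: "w \<in> face_space N (\<phi> x)"
      define v where "v = \<psi>' y w"
      have "v \<in> face_space M (\<psi> y)" unfolding v_def
        by (rule part_a[OF pN iN pM V imgU C1\<psi> yV]) (use w in \<open>simp add: y_def\<close>)
      then have vE: "v \<in> face_space M x" using \<psi>x y_def by simp
      obtain \<delta> where \<delta>: "\<delta> > 0" "\<And>t. \<bar>t\<bar> < \<delta> \<Longrightarrow> y + t *\<^sub>R w \<in> V"
        using line_in[OF pN V yV] w y_def by blast
      define S where "S = {-\<delta><..<\<delta>}"
      have S: "open S" "0 \<in> S" unfolding S_def using \<delta> by auto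
      have gS: "(\<lambda>t. y + t *\<^sub>R w) ` S \<subseteq> V" unfolding S_def using \<delta> by auto
      have D\<psi>: "(\<psi> has_derivative \<psi>' y) (at y within V)"
        by (rule C1_has_derivative_within[OF polytope_imp_convex[OF pN] polytope_imp_closed[OF pN] iN V C1\<psi> yV])
      have D\<psi>': "(\<psi> has_derivative \<psi>' y) (at ((\<lambda>t. y + t *\<^sub>R w) 0) within (\<lambda>t. y + t *\<^sub>R w) ` S)"
        using has_derivative_subset[OF D\<psi> gS] by simp
      have c1: "((\<psi> \<circ> (\<lambda>t. y + t *\<^sub>R w)) has_derivative (\<psi>' y \<circ> (\<lambda>t. t *\<^sub>R w))) (at 0 within S)"
        by (rule diff_chain_within[OF line_deriv D\<psi>'])
      have hS: "(\<psi> \<circ> (\<lambda>t. y + t *\<^sub>R w)) ` S \<subseteq> U" using gS bij2 by (auto simp: bij_betw_def)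
      have D\<phi>: "(\<phi> has_derivative \<phi>' x) (at x within U)"
        by (rule C1_has_derivative_within[OF polytope_imp_convex[OF pM] polytope_imp_closed[OF pM] iM U C1 x])
      have D\<phi>': "(\<phi> has_derivative \<phi>' x) (at ((\<psi> \<circ> (\<lambda>t. y + t *\<^sub>R w)) 0) within (\<psi> \<circ> (\<lambda>t. y + t *\<^sub>R w)) ` S)"
        using has_derivative_subset[OF D\<phi> hS] \<psi>x y_def by simp
      have c2: "((\<phi> \<circ> (\<psi> \<circ> (\<lambda>t. y + t *\<^sub>R w))) has_derivative (\<phi>' x \<circ> (\<psi>' y \<circ> (\<lambda>t. t *\<^sub>R w)))) (at 0 within S)"
        by (rule diff_chain_within[OF c1 D\<phi>'])
      have eq: "y + t *\<^sub>R w = (\<phi> \<circ> (\<psi> \<circ> (\<lambda>t. y + t *\<^sub>R w))) t" if "t \<in> S" for t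
        using gS that \<phi>\<psi> by auto
      have c3: "((\<lambda>t. y + t *\<^sub>R w) has_derivative (\<phi>' x \<circ> (\<psi>' y \<circ> (\<lambda>t. t *\<^sub>R w)))) (at 0)"
        using has_derivative_transform[OF S(2) eq c2] at_within_open[OF S(2) S(1)] by simp
      have c4: "((\<lambda>t. y + t *\<^sub>R w) has_derivative (\<lambda>t. t *\<^sub>R w)) (at 0)"
        by (rule line_deriv)
      have "(\<phi>' x \<circ> (\<psi>' y \<circ> (\<lambda>t. t *\<^sub>R w))) = (\<lambda>t. t *\<^sub>R w)"
        by (rule has_derivative_unique[OF c3 c4])
      then have "(\<phi>' x \<circ> (\<psi>' y \<circ> (\<lambda>t. t *\<^sub>R w))) 1 = (\<lambda>t::real. t *\<^sub>R w) 1" by simp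
      then have "\<phi>' x v = w" unfolding v_def by simp
      then show "w \<in> \<phi>' x ` face_space M x" using vE by blast
    qed
  qed
qed

end
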